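(* Let $\epsilon\in(0,1)$ and $\mu\ge1$. Let $R^*\in\arg\min_{R\in\mathcal{O}_{p\times k}}\max_{e\in\mathcal{E}}\mathbb{E}_{\mathbf{x}\sim P_e}\|\mathbf{x}-\mathbf{x}RR^\top\|_2^2$ (the population worst-case completion problem with fully observed source domains, equivalently a maxRCS solution). Let $Q_{\mathrm{target}}$ be a distribution on masks $\omega\in\{0,1\}^p$ such that, for $\omega\sim Q_{\mathrm{target}}$, the number $s$ of zero entries of $\omega$ satisfies $s\le\frac{p\epsilon}{k\mu^2(2\epsilon+1)}$ almost surely. If $R^*$ is $\mu$-incoherent, then $$\sup_{P\in\mathcal{P}}\mathcal{L}_{P,Q_{\mathrm{target}}}(R^* )\le(1+\epsilon)\min_{R\in\mathcal{O}_{p\times k}}\sup_{P\in\mathcal{P}}\mathcal{L}_{P,Q_{\mathrm{target}}}(R).$$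
   Context: $\mathcal{O}_{p\times k}=\{V\in\mathbb{R}^{p\times k}:V^\top V=I_k\}$. Source domains $\mathcal{E}=\{1,\dots,E\}$; each $P_e$ is a distribution on $\mathbb{R}^{1\times p}$ with mean zero and finite covariance $\Sigma_e=\mathbb{E}[\mathbf{x}^\top\mathbf{x}]$, $\operatorname{Tr}(\Sigma_e)>0$. $\mathcal{P}$ is the set of distributions on $\mathbb{R}^{1\times p}$ with mean zero, finite second moments and $\mathbb{E}_P[\mathbf{x}^\top\mathbf{x}]\in\operatorname{conv}(\{\Sigma_e\}_{e\in\mathcal{E}})$. $R\in\mathcal{O}_{p\times k}$ is $\mu$-incoherent if every row $R^{(i)}$ satisfies $\|R^{(i)}\|_2\le\mu\sqrt{k/p}$. For $\mathbf{x}\in\mathbb{R}^{1\times p}$, a mask $\omega\in\{0,1\}^p$ ($\omega_i=1$ meaning coordinate $i$ is observed) and $R\in\mathcal{O}_{p\times k}$, $\ell_{\mathrm{OLS}}(\mathbf{x},\omega,R)$ denotes a minimizer over $\ell\in\mathbb{R}^{1\times k}$ of $\sum_{i\in[p]:\omega_i=1}(\mathbf{x}_i-[\ell R^\top]_i)^2$ (any measurable choice of minimizer). For distributions $P$ of $\mathbf{x}$ and $Q$ of $\omega$ (with $\omega$ independent of $\mathbf{x}$), $\mathcal{L}_{P,Q}(R):=\mathbb{E}_{\mathbf{x}\sim P,\omega\sim Q}\|\mathbf{x}-\ell_{\mathrm{OLS}}(\mathbf{x},\omega,R)R^\top\|_2^2$. *)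

theory Defs
  imports "HOL-Analysis.Analysis" "HOL-Probability.Probability"
begin

text \<open>Row vectors x in R^{1 x p} are modelled as real^'p; a p x k matrix R as
  real^'k^'p (rows indexed by 'p).  The row vector l R^T equals R *v l, and
  x R equals x v* R.  A mask is a function 'p => bool (True = observed).\<close>

definition orthonormal :: "real^'k^'p \<Rightarrow> bool" where
  "orthonormal R \<longleftrightarrow> transpose R ** R = mat 1"

definition incoherent :: "real \<Rightarrow> real^'k^'p \<Rightarrow> bool" where
  "incoherent \<mu> R \<longleftrightarrow>
     (\<forall>i. norm (R $ i) \<le> \<mu> * sqrt (real CARD('k) / real CARD('p)))"

definition centered_l2 :: "(real^'p) measure \<Rightarrow> bool" where
  "centered_l2 P \<longleftrightarrow> prob_space P \<and> sets P = sets borel \<and>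
     (\<forall>i. integrable P (\<lambda>x. x $ i) \<and> (\<integral>x. x $ i \<partial>P) = 0) \<and>
     integrable P (\<lambda>x. (norm x)\<^sup>2)"

definition cov :: "(real^'p) measure \<Rightarrow> real^'p^'p" where
  "cov P = (\<chi> i j. \<integral>x. x $ i * x $ j \<partial>P)"

definition mtrace :: "real^'p^'p \<Rightarrow> real" where
  "mtrace A = (\<Sum>i\<in>UNIV. A $ i $ i)"

definition Pset :: "nat \<Rightarrow> (nat \<Rightarrow> (real^'p) measure) \<Rightarrow> (real^'p) measure set" where
  "Pset E Pe = {P. centered_l2 P \<and> cov P \<in> convex hull ((\<lambda>e. cov (Pe e)) ` {1..E})}"

definition is_ols :: "real^'p \<Rightarrow> ('p \<Rightarrow> bool) \<Rightarrow> real^'k^'p \<Rightarrow> real^'k \<Rightarrow> bool" where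
  "is_ols x \<omega> R l \<longleftrightarrow>
     (\<forall>l'. (\<Sum>i\<in>{i. \<omega> i}. (x $ i - (R *v l) $ i)\<^sup>2)
          \<le> (\<Sum>i\<in>{i. \<omega> i}. (x $ i - (R *v l') $ i)\<^sup>2))"

text \<open>Completion loss L_{P,Q}(R) for a given choice function lsel of OLS minimizers;
  x ~ P and omega ~ Q independent (expectation taken as iterated nonnegative integral).\<close>
definition compl_loss ::
  "(real^'p \<Rightarrow> ('p \<Rightarrow> bool) \<Rightarrow> real^'k^'p \<Rightarrow> real^'k)
     \<Rightarrow> (real^'p) measure \<Rightarrow> ('p \<Rightarrow> bool) pmf \<Rightarrow> real^'k^'p \<Rightarrow> ennreal" where
  "compl_loss lsel P Q R =
     (\<integral>\<^sup>+ \<omega>. (\<integral>\<^sup>+ x. ennreal ((norm (x - R *v lsel x \<omega> R))\<^sup>2) \<partial>P) \<partial>measure_pmf Q)"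

definition worst_risk :: "nat \<Rightarrow> (nat \<Rightarrow> (real^'p) measure) \<Rightarrow> real^'k^'p \<Rightarrow> real" where
  "worst_risk E Pe R =
     Max ((\<lambda>e. \<integral>x. (norm (x - R *v (x v* R)))\<^sup>2 \<partial>(Pe e)) ` {1..E})"

end

theory Submission
  imports Defs
begin

lemma arith_key:
  fixes n2 SM rho D delta eps :: real
  assumes "0 \<le> n2" "0 \<le> SM" "0 \<le> rho" "0 \<le> delta" "delta \<le> eps/(2*eps+1)" "0 < eps"
    "n2 - SM = - D" "SM \<le> delta * n2" "D\<^sup>2 \<le> rho * SM"
  shows "n2 \<le> eps * rho"
proof (cases "n2 = 0")
  case True then show ?thesis using assms by simp
next
  case False
  hence n2p: "n2 > 0" using assms by simp
  have dd: "delta * (2*eps+1) \<le> eps" using assms by (simp add: divide_simps)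
  have d1: "delta < 1"
  proof (rule ccontr)
    assume "\<not> delta < 1"
    hence "1 * (2*eps+1) \<le> delta * (2*eps+1)" using assms by (intro mult_right_mono) auto
    hence "2*eps+1 \<le> delta * (2*eps+1)" by (simp only: mult_1_left)
    thus False using dd assms by linarith
  qed
  have a0: "(1-delta)*n2 = n2 - delta*n2" by (simp add: algebra_simps)
  have a: "(1 - delta) * n2 \<le> \<bar>D\<bar>" using assms a0 by linarith
  have "((1 - delta) * n2)\<^sup>2 \<le> D\<^sup>2"
  proof -
    have "0 \<le> (1 - delta) * n2" using d1 n2p by simp
    from power_mono[OF a this, of 2] show ?thesis by simp
  qed
  also have "\<dots> \<le> rho * delta * n2" using assms mult_left_mono[OF assms(8) assms(3)] by (simp add: mult.assoc)
  finally have "(1 - delta)\<^sup>2 * n2 * n2 \<le> (rho * delta) * n2" by (simp add: power2_eq_square algebra_simps)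
  hence b: "(1 - delta)\<^sup>2 * n2 \<le> rho * delta" using n2p by simp
  have "delta * (2*eps+1) \<le> eps" using assms by (simp add: divide_simps)
  have c: "delta \<le> eps * (1 - delta)\<^sup>2" using assms d1
  proof -
    have "eps*(1-delta)^2 = (eps - delta*(2*eps+1)) + eps*delta^2 + delta" by (simp add: power2_eq_square algebra_simps)
    moreover have "eps*delta^2 \<ge> 0" using assms by simp
    ultimately show ?thesis using dd by linarith
  qed
  have "(1 - delta)\<^sup>2 * n2 \<le> rho * (eps * (1 - delta)\<^sup>2)"
    using b mult_left_mono[OF c assms(3)] by linarith
  hence "(1 - delta)\<^sup>2 * n2 \<le> (1 - delta)\<^sup>2 * (eps * rho)" by (simp add: algebra_simps)
  moreover have "(1 - delta)\<^sup>2 > 0" using d1 by simp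
  ultimately show ?thesis by simp
qed

lemma B0l: fixes B C :: real assumes C0: "C \<ge> 0" and G: "\<And>t. 0 \<le> - 2*t*B + t\<^sup>2 * C" shows "B = 0"
proof -
  define t where "t = B/(C+1)"
  have c1: "C + 1 > 0" using C0 by simp
  have "0 \<le> (- 2*t*B + t\<^sup>2 * C) * (C+1)\<^sup>2" using G[of t] c1 by simp
  also have "\<dots> = -2*B*(t*(C+1))*(C+1) + (t*(C+1))\<^sup>2*C" by (simp add: power2_eq_square algebra_simps)
  also have "t*(C+1) = B" unfolding t_def using c1 by simp
  also have "-2*B*B*(C+1) + B\<^sup>2*C = - 2*B*B*(C+1) + B*B*C" by (simp add: power2_eq_square)
  also have "\<dots> = - (B*B) * (C + 2)" by (simp add: algebra_simps)
  finally have "B*B*(C+2) \<le> 0" by simp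
  hence "B*B \<le> 0" using C0 by (simp add: mult_le_0_iff)
  thus ?thesis by (auto simp: mult_le_0_iff)
qed

lemma mv_comp: "((R::real^'k^'p) *v v) $ i = inner (R $ i) v"
  by (simp add: matrix_vector_mult_def inner_vec_def)

lemma orth_TR:
  assumes "orthonormal (R::real^'k^'p)" shows "(R *v v) v* R = v"
proof -
  have "(R *v v) v* R = transpose R *v (R *v v)" by simp
  also have "\<dots> = (transpose R ** R) *v v" by (simp only: matrix_vector_mul_assoc)
  finally show ?thesis using assms by (simp add: orthonormal_def)
qed

lemma orth_inner:
  assumes "orthonormal (R::real^'k^'p)" shows "inner (R *v v) (R *v w) = inner v w"
  by (metis dot_lmul_matrix orth_TR[OF assms])

lemma split_UNIV: fixes f :: "'p::finite \<Rightarrow> real" shows "(\<Sum>i\<in>UNIV. f i) = (\<Sum>i\<in>{i. \<omega> i}. f i) + (\<Sum>i\<in>{i. \<not> \<omega> i}. (f i::real))"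
proof -
  have "UNIV = {i. \<omega> i} \<union> {i. \<not> \<omega> i}" by auto
  hence "(\<Sum>i\<in>UNIV. f i) = (\<Sum>i\<in>{i. \<omega> i} \<union> {i. \<not> \<omega> i}. f i)" by simp
  also have "\<dots> = (\<Sum>i\<in>{i. \<omega> i}. f i) + (\<Sum>i\<in>{i. \<not> \<omega> i}. f i)"
    by (rule sum.union_disjoint) auto
  finally show ?thesis .
qed

lemma ols_bound:
  fixes R :: "real^'k^'p" and x :: "real^'p" and l :: "real^'k"
  assumes orth: "orthonormal R" and ols: "is_ols x \<omega> R l"
   and dM: "(\<Sum>i\<in>{i. \<not> \<omega> i}. (norm (R$i))\<^sup>2) \<le> delta" and d0: "0 \<le> delta"
   and dle: "delta \<le> eps/(2*eps+1)" and e: "0 < eps"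
  shows "(norm (x - R *v l))\<^sup>2 \<le> (1+eps) * (norm (x - R *v (x v* R)))\<^sup>2"
proof -
  define a where "a = x v* R"
  define r where "r = x - R *v a"
  define d where "d = l - a"
  define y where "y = R *v d"
  let ?O = "{i. \<omega> i}" let ?M = "{i. \<not> \<omega> i}"
  have rR: "r v* R = 0" unfolding r_def a_def
    by (simp add: vector_matrix_mult_diff_distrib orth_TR[OF orth])
  have ry: "inner r y = 0" unfolding y_def by (simp add: dot_lmul_matrix[symmetric] rR)
  have yy: "inner y y = inner d d" unfolding y_def by (rule orth_inner[OF orth])
  have xl: "x - R *v l = r - y" unfolding r_def y_def d_def
    by (simp add: matrix_vector_mult_diff_distrib)
  have main: "(norm (x - R *v l))\<^sup>2 = (norm r)\<^sup>2 + inner d d"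
    unfolding xl power2_norm_eq_inner using ry yy
    by (simp add: inner_diff_left inner_diff_right inner_commute)
  define B where "B = (\<Sum>i\<in>?O. (r$i - y$i) * y$i)"
  define C where "C = (\<Sum>i\<in>?O. (y$i)\<^sup>2)"
  define G0 where "G0 = (\<Sum>i\<in>?O. (r$i - y$i)\<^sup>2)"
  have Gt: "G0 \<le> G0 - 2*t*B + t\<^sup>2 * C" for t
  proof -
    have c1: "(x - R *v l) $ i = r$i - y$i" for i by (simp add: xl)
    have c2: "x $ i - (R *v (l + t *\<^sub>R d)) $ i = (r$i - y$i) - t * y$i" for i
    proof -
      have eq: "x - R *v (l + t *\<^sub>R d) = (x - R *v l) - t *\<^sub>R y"
        unfolding y_def by (simp add: matrix_vector_right_distrib matrix_vector_mult_scaleR)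
      have "x $ i - (R *v (l + t *\<^sub>R d)) $ i = (x - R *v (l + t *\<^sub>R d)) $ i" by simp
      also have "\<dots> = ((x - R *v l) - t *\<^sub>R y) $ i" by (simp only: eq)
      also have "\<dots> = (x - R *v l) $ i - t * y $ i" by simp
      also have "(x - R *v l) $ i = r$i - y$i" by (rule c1)
      finally show ?thesis .
    qed
    have "G0 = (\<Sum>i\<in>?O. (x $ i - (R *v l) $ i)\<^sup>2)"
      unfolding G0_def c1[symmetric] by simp
    also have "\<dots> \<le> (\<Sum>i\<in>?O. (x $ i - (R *v (l + t *\<^sub>R d)) $ i)\<^sup>2)"
      using ols unfolding is_ols_def by blast
    also have "\<dots> = (\<Sum>i\<in>?O. ((r$i - y$i) - t * y$i)\<^sup>2)"
      using c2 by simp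
    also have "\<dots> = (\<Sum>i\<in>?O. (r$i - y$i)\<^sup>2 - 2*t*((r$i - y$i) * y$i) + t\<^sup>2 * (y$i)\<^sup>2)"
      by (rule sum.cong) (simp_all add: power2_diff power_mult_distrib)
    also have "\<dots> = G0 - 2*t*B + t\<^sup>2 * C"
      unfolding G0_def B_def C_def
      by (simp only: sum.distrib sum_subtractf sum_distrib_left)
    finally show ?thesis .
  qed
  have B0: "B = 0"
    by (rule B0l[of C]) (use Gt in \<open>auto simp: C_def sum_nonneg\<close>)
  have s1: "(\<Sum>i\<in>?O. (y$i)\<^sup>2) = (\<Sum>i\<in>?O. r$i * y$i)"
    using B0 unfolding B_def by (simp add: power2_eq_square left_diff_distrib sum_subtractf)
  have s2: "(\<Sum>i\<in>?O. r$i * y$i) + (\<Sum>i\<in>?M. r$i * y$i) = 0"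
    using ry split_UNIV[of "\<lambda>i. r$i * y$i" \<omega>] by (simp add: inner_vec_def)
  have s3: "inner d d = (\<Sum>i\<in>?O. (y$i)\<^sup>2) + (\<Sum>i\<in>?M. (y$i)\<^sup>2)"
    using yy split_UNIV[of "\<lambda>i. (y$i)\<^sup>2" \<omega>] by (simp add: inner_vec_def power2_eq_square)
  have s4: "(\<Sum>i\<in>?M. (y$i)\<^sup>2) \<le> delta * inner d d"
  proof -
    have "(\<Sum>i\<in>?M. (y$i)\<^sup>2) \<le> (\<Sum>i\<in>?M. (norm (R$i))\<^sup>2 * inner d d)"
    proof (rule sum_mono)
      fix i
      have "(y$i)\<^sup>2 = (inner (R$i) d)\<^sup>2" unfolding y_def by (simp add: mv_comp)
      also have "\<dots> \<le> inner (R$i) (R$i) * inner d d" by (rule Cauchy_Schwarz_ineq)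
      finally show "(y$i)\<^sup>2 \<le> (norm (R$i))\<^sup>2 * inner d d" by (simp add: power2_norm_eq_inner)
    qed
    also have "\<dots> = (\<Sum>i\<in>?M. (norm (R$i))\<^sup>2) * inner d d" by (simp add: sum_distrib_right)
    also have "\<dots> \<le> delta * inner d d" using dM by (intro mult_right_mono) auto
    finally show ?thesis .
  qed
  have s5: "(\<Sum>i\<in>?M. r$i * y$i)\<^sup>2 \<le> inner r r * (\<Sum>i\<in>?M. (y$i)\<^sup>2)"
  proof -
    have "(\<Sum>i\<in>?M. r$i * y$i)\<^sup>2 \<le> (\<Sum>i\<in>?M. (r$i)\<^sup>2) * (\<Sum>i\<in>?M. (y$i)\<^sup>2)"
      by (rule Cauchy_Schwarz_ineq_sum)
    moreover have "(\<Sum>i\<in>?M. (r$i)\<^sup>2) \<le> inner r r"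
      using split_UNIV[of "\<lambda>i. (r$i)\<^sup>2" \<omega>] sum_nonneg[of ?O "\<lambda>i. (r$i)\<^sup>2"]
      by (simp add: inner_vec_def power2_eq_square)
    moreover have "(\<Sum>i\<in>?M. (y$i)\<^sup>2) \<ge> 0" by (simp add: sum_nonneg)
    ultimately show ?thesis by (meson mult_right_mono order_trans)
  qed
  have e7: "inner d d - (\<Sum>i\<in>?M. (y$i)\<^sup>2) = - (\<Sum>i\<in>?M. r$i * y$i)"
    using s1 s2 s3 by linarith
  have key: "inner d d \<le> eps * inner r r"
    by (rule arith_key[OF _ _ _ d0 dle e e7 s4 s5]) (simp_all add: sum_nonneg)
  have nr: "(norm r)\<^sup>2 = inner r r" by (simp add: power2_norm_eq_inner)
  have key2: "inner d d \<le> eps * (norm r)\<^sup>2" using key by (simp only: nr)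
  have "(norm (x - R *v l))\<^sup>2 \<le> (norm r)\<^sup>2 + eps * (norm r)\<^sup>2" using main key2 by linarith
  also have "\<dots> = (1+eps) * (norm r)\<^sup>2" by (simp add: distrib_right)
  finally have fin: "(norm (x - R *v l))\<^sup>2 \<le> (1+eps) * (norm r)\<^sup>2" .
  have req: "r = x - R *v (x v* R)" by (simp only: r_def a_def)
  show ?thesis using fin unfolding req .
qed

lemma proj_decomp:
  fixes R :: "real^'k^'p"
  assumes orth: "orthonormal R"
  shows "(norm (x - R *v l))\<^sup>2 = (norm (x - R *v (x v* R)))\<^sup>2 + inner (l - x v* R) (l - x v* R)"
proof -
  define a where "a = x v* R"
  define r where "r = x - R *v a"
  define d where "d = l - a"
  have rR: "r v* R = 0" unfolding r_def a_def
    by (simp add: vector_matrix_mult_diff_distrib orth_TR[OF orth])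
  have ry: "inner r (R *v d) = 0" by (simp add: dot_lmul_matrix[symmetric] rR)
  have yy: "inner (R *v d) (R *v d) = inner d d" by (rule orth_inner[OF orth])
  have xl: "x - R *v l = r - R *v d" unfolding r_def d_def
    by (simp add: matrix_vector_mult_diff_distrib)
  have "(norm (x - R *v l))\<^sup>2 = (norm r)\<^sup>2 + inner d d"
    unfolding xl power2_norm_eq_inner using ry yy
    by (simp add: inner_diff_left inner_diff_right inner_commute)
  thus ?thesis by (simp add: r_def a_def d_def)
qed

lemma proj_le:
  fixes R :: "real^'k^'p"
  assumes orth: "orthonormal R"
  shows "(norm (x - R *v (x v* R)))\<^sup>2 \<le> (norm (x - R *v l))\<^sup>2"
  using proj_decomp[OF orth, of x l] by simp

lemma proj_le_norm:
  fixes R :: "real^'k^'p"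
  assumes orth: "orthonormal R"
  shows "(norm (x - R *v (x v* R)))\<^sup>2 \<le> (norm x)\<^sup>2"
  using proj_le[OF orth, of x 0] by simp

definition Fq :: "real^'k^'p \<Rightarrow> real^'p^'p \<Rightarrow> real" where
  "Fq R A = (\<Sum>i\<in>UNIV. \<Sum>j\<in>UNIV. ((if i = j then 1 else 0) - inner (R$i) (R$j)) * A$i$j)"

lemma quad_form:
  fixes R :: "real^'k^'p"
  assumes orth: "orthonormal R"
  shows "(norm (x - R *v (x v* R)))\<^sup>2 =
     (\<Sum>i\<in>UNIV. \<Sum>j\<in>UNIV. ((if i = j then 1 else 0) - inner (R$i) (R$j)) * (x$i * x$j))"
proof -
  have d: "(norm x)\<^sup>2 = (norm (x - R *v (x v* R)))\<^sup>2 + inner (x v* R) (x v* R)"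
    using proj_decomp[OF orth, of x 0] by simp
  have n: "(norm x)\<^sup>2 = (\<Sum>i\<in>UNIV. \<Sum>j\<in>UNIV. (if i = j then 1 else 0) * (x$i * x$j))"
  proof -
    have n1: "(\<Sum>j\<in>UNIV. (if i = j then 1 else 0) * (x$i * x$j)) = x$i * x$i" for i
    proof -
      have "(\<Sum>j\<in>UNIV. (if i = j then 1 else 0) * (x$i * x$j)) = (\<Sum>j\<in>UNIV. if i = j then x$i * x$j else 0)"
        by (rule sum.cong) auto
      thus ?thesis by simp
    qed
    show ?thesis by (simp add: power2_norm_eq_inner inner_vec_def n1)
  qed
  have a: "inner (x v* R) (x v* R) = (\<Sum>i\<in>UNIV. \<Sum>j\<in>UNIV. inner (R$i) (R$j) * (x$i * x$j))"
  proof -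
    have "inner (x v* R) (x v* R) = (\<Sum>k\<in>UNIV. (\<Sum>i\<in>UNIV. x$i * R$i$k) * (\<Sum>j\<in>UNIV. x$j * R$j$k))"
      by (simp add: inner_vec_def vector_matrix_mult_def)
    also have "\<dots> = (\<Sum>k\<in>UNIV. \<Sum>i\<in>UNIV. \<Sum>j\<in>UNIV. (x$i * R$i$k) * (x$j * R$j$k))"
      by (simp only: sum_product)
    also have "\<dots> = (\<Sum>i\<in>UNIV. \<Sum>k\<in>UNIV. \<Sum>j\<in>UNIV. (x$i * R$i$k) * (x$j * R$j$k))"
      by (rule sum.swap)
    also have "\<dots> = (\<Sum>i\<in>UNIV. \<Sum>j\<in>UNIV. \<Sum>k\<in>UNIV. (x$i * R$i$k) * (x$j * R$j$k))"
      by (rule sum.cong[OF refl], rule sum.swap)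
    also have "\<dots> = (\<Sum>i\<in>UNIV. \<Sum>j\<in>UNIV. inner (R$i) (R$j) * (x$i * x$j))"
      by (simp add: inner_vec_def sum_distrib_left mult_ac)
    finally show ?thesis .
  qed
  have "(norm (x - R *v (x v* R)))\<^sup>2 = (\<Sum>i\<in>UNIV. \<Sum>j\<in>UNIV. (if i = j then 1 else 0) * (x$i * x$j))
     - (\<Sum>i\<in>UNIV. \<Sum>j\<in>UNIV. inner (R$i) (R$j) * (x$i * x$j))" using d n a by linarith
  also have "\<dots> = (\<Sum>i\<in>UNIV. \<Sum>j\<in>UNIV. ((if i = j then 1 else 0) - inner (R$i) (R$j)) * (x$i * x$j))"
    by (simp add: sum_subtractf left_diff_distrib)
  finally show ?thesis .
qed

lemma cl_meas:
  assumes "centered_l2 P" "f \<in> borel_measurable borel"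
  shows "f \<in> borel_measurable P"
proof -
  have "sets P = sets borel" using assms(1) by (simp add: centered_l2_def)
  thus ?thesis using assms(2) measurable_cong_sets[of P borel borel borel] by simp
qed

lemma g_borel:
  fixes R :: "real^'k^'p"
  shows "(\<lambda>x::real^'p. (norm (x - R *v (x v* R)))\<^sup>2) \<in> borel_measurable borel"
proof -
  have e: "R *v (x v* R) = (R ** transpose R) *v x" for x :: "real^'p"
    by (simp only: matrix_vector_mul_assoc[symmetric] transpose_matrix_vector)
  have "continuous_on UNIV (\<lambda>x::real^'p. (norm (x - (R ** transpose R) *v x))\<^sup>2)"
    by (intro continuous_intros linear_continuous_on matrix_vector_mul_linear)
  thus ?thesis unfolding e by (rule borel_measurable_continuous_onI)
qed

lemma g_int:
  fixes R :: "real^'k^'p"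
  assumes "centered_l2 P" "orthonormal R"
  shows "integrable P (\<lambda>x. (norm (x - R *v (x v* R)))\<^sup>2)"
proof (rule Bochner_Integration.integrable_bound)
  show "integrable P (\<lambda>x. (norm x)\<^sup>2)" using assms(1) by (simp add: centered_l2_def)
  show "(\<lambda>x. (norm (x - R *v (x v* R)))\<^sup>2) \<in> borel_measurable P"
    by (rule cl_meas[OF assms(1) g_borel])
  show "AE x in P. norm ((norm (x - R *v (x v* R)))\<^sup>2) \<le> norm ((norm x)\<^sup>2)"
    using proj_le_norm[OF assms(2)] by simp
qed

lemma xx_int:
  assumes "centered_l2 P"
  shows "integrable P (\<lambda>x::real^'p. x$i * x$j)"
proof (rule Bochner_Integration.integrable_bound)
  show "integrable P (\<lambda>x. (norm x)\<^sup>2)" using assms(1) by (simp add: centered_l2_def)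
  have "continuous_on UNIV (\<lambda>x::real^'p. x$i * x$j)"
    by (intro continuous_intros)
  thus "(\<lambda>x::real^'p. x$i * x$j) \<in> borel_measurable P"
    by (intro cl_meas[OF assms(1)] borel_measurable_continuous_onI)
  show "AE x in P. norm (x$i * x$j) \<le> norm ((norm x)\<^sup>2)"
  proof (rule AE_I2)
    fix x :: "real^'p"
    have "\<bar>x$i\<bar> * \<bar>x$j\<bar> \<le> norm x * norm x"
      by (intro mult_mono component_le_norm_cart) auto
    thus "norm (x$i * x$j) \<le> norm ((norm x)\<^sup>2)" by (simp add: abs_mult power2_eq_square)
  qed
qed

lemma g_integral:
  fixes R :: "real^'k^'p"
  assumes "centered_l2 P" "orthonormal R"
  shows "(\<integral>x. (norm (x - R *v (x v* R)))\<^sup>2 \<partial>P) = Fq R (cov P)"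
proof -
  have "(\<integral>x. (norm (x - R *v (x v* R)))\<^sup>2 \<partial>P) =
     (\<integral>x. (\<Sum>i\<in>UNIV. \<Sum>j\<in>UNIV. ((if i = j then 1 else 0) - inner (R$i) (R$j)) * (x$i * x$j)) \<partial>P)"
    by (simp only: quad_form[OF assms(2)])
  also have "\<dots> = (\<Sum>i\<in>UNIV. \<integral>x. (\<Sum>j\<in>UNIV. ((if i = j then 1 else 0) - inner (R$i) (R$j)) * (x$i * x$j)) \<partial>P)"
    by (rule Bochner_Integration.integral_sum[where f="\<lambda>i x. \<Sum>j\<in>UNIV. ((if i = j then 1 else 0) - inner (R$i) (R$j)) * (x$i * x$j)"])
      (auto intro!: Bochner_Integration.integrable_sum Bochner_Integration.integrable_mult_right xx_int[OF assms(1)])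
  also have "\<dots> = (\<Sum>i\<in>UNIV. \<Sum>j\<in>UNIV. \<integral>x. ((if i = j then 1 else 0) - inner (R$i) (R$j)) * (x$i * x$j) \<partial>P)"
    by (intro sum.cong refl Bochner_Integration.integral_sum[where f="\<lambda>j x. ((if _ = j then 1 else 0) - inner (R$_) (R$j)) * (x$_ * x$j)"] Bochner_Integration.integrable_mult_right xx_int[OF assms(1)])
  also have "\<dots> = Fq R (cov P)"
    unfolding Fq_def cov_def by simp
  finally show ?thesis .
qed

definition cm :: "real^'k^'p \<Rightarrow> 'p \<Rightarrow> 'p \<Rightarrow> real" where
  "cm R i j = (if i = j then 1 else 0) - inner (R$i) (R$j)"

lemma Fq_cm: "Fq R A = (\<Sum>i\<in>UNIV. \<Sum>j\<in>UNIV. cm R i j * A$i$j)"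
  unfolding Fq_def cm_def ..

lemma Fq_lin: "Fq R (u *\<^sub>R A + v *\<^sub>R B) = u * Fq R A + v * Fq R B"
proof -
  have "Fq R (u *\<^sub>R A + v *\<^sub>R B) = (\<Sum>i\<in>UNIV. \<Sum>j\<in>UNIV. u * (cm R i j * A$i$j) + v * (cm R i j * B$i$j))"
    unfolding Fq_cm by (intro sum.cong refl) (simp add: algebra_simps)
  also have "\<dots> = u * Fq R A + v * Fq R B"
    unfolding Fq_cm by (simp only: sum.distrib sum_distrib_left)
  finally show ?thesis .
qed

lemma Fq_hull:
  assumes "\<And>A. A \<in> S \<Longrightarrow> Fq R A \<le> W" "A \<in> convex hull S"
  shows "Fq R A \<le> W"
proof -
  have cv: "convex {A. Fq R A \<le> W}"
    unfolding convex_def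
  proof (intro ballI allI impI)
    fix x y and u v :: real
    assume "x \<in> {A. Fq R A \<le> W}" "y \<in> {A. Fq R A \<le> W}" "0 \<le> u" "0 \<le> v" "u + v = 1"
    hence "u * Fq R x + v * Fq R y \<le> u * W + v * W"
      by (intro add_mono mult_left_mono) auto
    also have "\<dots> = W" using \<open>u + v = 1\<close> by (simp add: distrib_right[symmetric])
    finally show "u *\<^sub>R x + v *\<^sub>R y \<in> {A. Fq R A \<le> W}" by (simp add: Fq_lin)
  qed
  have "convex hull S \<subseteq> {A. Fq R A \<le> W}"
    by (rule hull_minimal) (use assms(1) cv in auto)
  thus ?thesis using assms(2) by auto
qed

lemma canc: fixes K p c e :: real assumes "K \<noteq> 0" "p \<noteq> 0" "c \<noteq> 0"
  shows "(p * e / (K * c)) * (K / p) = e / c"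
  using assms by (simp add: field_simps)

theorem mainTheorem8:
  fixes E :: nat
    and Pe :: "nat \<Rightarrow> (real^'p) measure"
    and \<epsilon> \<mu> :: real
    and Rstar :: "real^'k^'p"
    and Q :: "('p \<Rightarrow> bool) pmf"
    and lsel :: "real^'p \<Rightarrow> ('p \<Rightarrow> bool) \<Rightarrow> real^'k^'p \<Rightarrow> real^'k"
  assumes E_pos: "E \<ge> 1"
    and Pe_ok: "\<And>e. e \<in> {1..E} \<Longrightarrow> centered_l2 (Pe e)"
    and Pe_tr: "\<And>e. e \<in> {1..E} \<Longrightarrow> mtrace (cov (Pe e)) > 0"
    and eps: "0 < \<epsilon>" "\<epsilon> < 1"
    and mu: "\<mu> \<ge> 1"
    and Rstar_orth: "orthonormal Rstar"
    and Rstar_min: "\<And>R :: real^'k^'p. orthonormal R \<Longrightarrow> worst_risk E Pe Rstar \<le> worst_risk E Pe R"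
    and Q_missing: "\<And>\<omega>. \<omega> \<in> set_pmf Q \<Longrightarrow>
        real (card {i. \<not> \<omega> i})
          \<le> real CARD('p) * \<epsilon> / (real CARD('k) * \<mu>\<^sup>2 * (2 * \<epsilon> + 1))"
    and lsel_ols: "\<And>x \<omega> R. orthonormal R \<Longrightarrow> is_ols x \<omega> R (lsel x \<omega> R)"
    and lsel_meas: "\<And>\<omega> R. orthonormal R \<Longrightarrow> (\<lambda>x. lsel x \<omega> R) \<in> borel_measurable borel"
    and incoh: "incoherent \<mu> Rstar"
  shows "\<forall>R. orthonormal R \<longrightarrow>
           (SUP P\<in>Pset E Pe. compl_loss lsel P Q Rstar)
             \<le> ennreal (1 + \<epsilon>) * (SUP P\<in>Pset E Pe. compl_loss lsel P Q R)"
proof (intro allI impI)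
  fix R :: "real^'k^'p" assume Rorth: "orthonormal R"
  define W where "W = worst_risk E Pe Rstar"
  have finI: "finite ((\<lambda>e. \<integral>x. (norm (x - R' *v (x v* R')))\<^sup>2 \<partial>(Pe e)) ` {1..E})" for R' :: "real^'k^'p"
    by simp
  have neI: "((\<lambda>e. \<integral>x. (norm (x - R' *v (x v* R')))\<^sup>2 \<partial>(Pe e)) ` {1..E}) \<noteq> {}" for R' :: "real^'k^'p"
    using E_pos by auto
  have We: "Fq Rstar (cov (Pe e)) \<le> W" if "e \<in> {1..E}" for e
  proof -
    have "Fq Rstar (cov (Pe e)) = (\<integral>x. (norm (x - Rstar *v (x v* Rstar)))\<^sup>2 \<partial>(Pe e))"
      using g_integral[OF Pe_ok[OF that] Rstar_orth] by simp
    also have "\<dots> \<le> W" unfolding W_def worst_risk_def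
      by (rule Max_ge[OF finI]) (use that in auto)
    finally show ?thesis .
  qed
  have W0: "0 \<le> W"
  proof -
    have "0 \<le> (\<integral>x. (norm (x - Rstar *v (x v* Rstar)))\<^sup>2 \<partial>(Pe 1))" by simp
    also have "\<dots> = Fq Rstar (cov (Pe 1))" using g_integral[OF Pe_ok Rstar_orth] E_pos by simp
    also have "\<dots> \<le> W" using We E_pos by simp
    finally show ?thesis .
  qed
  have hullb: "(\<integral>x. (norm (x - Rstar *v (x v* Rstar)))\<^sup>2 \<partial>P) \<le> W" if "P \<in> Pset E Pe" for P
  proof -
    have P: "centered_l2 P" "cov P \<in> convex hull ((\<lambda>e. cov (Pe e)) ` {1..E})"
      using that by (auto simp: Pset_def)
    have "Fq Rstar (cov P) \<le> W" by (rule Fq_hull[OF _ P(2)]) (use We in auto)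
    thus ?thesis using g_integral[OF P(1) Rstar_orth] by simp
  qed
  have kp: "real CARD('k) > 0" "real CARD('p) > 0" by auto
  have deltab: "(\<Sum>i\<in>{i. \<not> \<omega> i}. (norm (Rstar$i))\<^sup>2) \<le> \<epsilon>/(2*\<epsilon>+1)" if "\<omega> \<in> set_pmf Q" for \<omega>
  proof -
    let ?b = "\<mu>\<^sup>2 * (real CARD('k) / real CARD('p))"
    have rowb: "(norm (Rstar$i))\<^sup>2 \<le> ?b" for i
    proof -
      have "norm (Rstar$i) \<le> \<mu> * sqrt (real CARD('k) / real CARD('p))"
        using incoh by (simp add: incoherent_def)
      hence "(norm (Rstar$i))\<^sup>2 \<le> (\<mu> * sqrt (real CARD('k) / real CARD('p)))\<^sup>2"
        by (intro power_mono) auto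
      thus ?thesis by (simp add: power_mult_distrib)
    qed
    have "(\<Sum>i\<in>{i. \<not> \<omega> i}. (norm (Rstar$i))\<^sup>2) \<le> real (card {i. \<not> \<omega> i}) * ?b"
      using sum_bounded_above[of "{i. \<not> \<omega> i}" "\<lambda>i. (norm (Rstar$i))\<^sup>2" ?b] rowb by simp
    also have "\<dots> \<le> (real CARD('p) * \<epsilon> / (real CARD('k) * \<mu>\<^sup>2 * (2 * \<epsilon> + 1))) * ?b"
      by (rule mult_right_mono[OF Q_missing[OF that]]) simp
    also have "\<dots> = \<epsilon>/(2*\<epsilon>+1)"
    proof -
      have nz: "real CARD('k) * \<mu>\<^sup>2 \<noteq> 0" "real CARD('p) \<noteq> 0" "2*\<epsilon>+1 \<noteq> 0"
        using kp mu eps by auto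
      have "?b = (real CARD('k) * \<mu>\<^sup>2) / real CARD('p)" by simp
      show ?thesis unfolding \<open>?b = _\<close> by (rule canc[OF nz])
    qed
    finally show ?thesis .
  qed
  have pw: "(norm (x - Rstar *v lsel x \<omega> Rstar))\<^sup>2 \<le> (1+\<epsilon>) * (norm (x - Rstar *v (x v* Rstar)))\<^sup>2"
    if "\<omega> \<in> set_pmf Q" for x \<omega>
    by (rule ols_bound[OF Rstar_orth lsel_ols[OF Rstar_orth] deltab[OF that] _ order.refl eps(1)])
       (use eps in simp)
  have up: "compl_loss lsel P Q Rstar \<le> ennreal (1+\<epsilon>) * ennreal W" if PP: "P \<in> Pset E Pe" for P
  proof -
    have P: "centered_l2 P" using PP by (simp add: Pset_def)
    have inner: "(\<integral>\<^sup>+ x. ennreal ((norm (x - Rstar *v lsel x \<omega> Rstar))\<^sup>2) \<partial>P) \<le> ennreal ((1+\<epsilon>) * W)"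
      if "\<omega> \<in> set_pmf Q" for \<omega>
    proof -
      have "(\<integral>\<^sup>+ x. ennreal ((norm (x - Rstar *v lsel x \<omega> Rstar))\<^sup>2) \<partial>P)
          \<le> (\<integral>\<^sup>+ x. ennreal ((1+\<epsilon>) * (norm (x - Rstar *v (x v* Rstar)))\<^sup>2) \<partial>P)"
        by (intro nn_integral_mono ennreal_leI pw[OF that])
      also have "\<dots> = ennreal (\<integral>x. (1+\<epsilon>) * (norm (x - Rstar *v (x v* Rstar)))\<^sup>2 \<partial>P)"
        by (rule nn_integral_eq_integral)
          (use g_int[OF P Rstar_orth] eps in auto)
      also have "\<dots> = ennreal ((1+\<epsilon>) * (\<integral>x. (norm (x - Rstar *v (x v* Rstar)))\<^sup>2 \<partial>P))"
        by simp
      also have "\<dots> \<le> ennreal ((1+\<epsilon>) * W)"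
        using hullb[OF PP] eps by (intro ennreal_leI mult_left_mono) auto
      finally show ?thesis .
    qed
    have "compl_loss lsel P Q Rstar \<le> (\<integral>\<^sup>+ \<omega>. ennreal ((1+\<epsilon>) * W) \<partial>measure_pmf Q)"
      unfolding compl_loss_def
      by (rule nn_integral_mono_AE) (use inner AE_measure_pmf_iff in auto)
    also have "\<dots> = ennreal ((1+\<epsilon>) * W)" by (simp add: measure_pmf.emeasure_space_1)
    also have "\<dots> = ennreal (1+\<epsilon>) * ennreal W" using eps W0 by (simp add: ennreal_mult)
    finally show ?thesis .
  qed
  have low: "ennreal (worst_risk E Pe R) \<le> (SUP P\<in>Pset E Pe. compl_loss lsel P Q R)"
  proof -
    obtain e0 where e0: "e0 \<in> {1..E}"
      "worst_risk E Pe R = (\<integral>x. (norm (x - R *v (x v* R)))\<^sup>2 \<partial>(Pe e0))"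
      using Max_in[OF finI neI, of R] unfolding worst_risk_def by auto
    have Pin: "Pe e0 \<in> Pset E Pe"
      unfolding Pset_def using Pe_ok[OF e0(1)] e0(1) by (auto intro: hull_inc)
    have "ennreal (worst_risk E Pe R) = (\<integral>\<^sup>+ x. ennreal ((norm (x - R *v (x v* R)))\<^sup>2) \<partial>(Pe e0))"
      unfolding e0(2)
      by (rule nn_integral_eq_integral[symmetric]) (use g_int[OF Pe_ok[OF e0(1)] Rorth] in auto)
    hence "ennreal (worst_risk E Pe R) = (\<integral>\<^sup>+ \<omega>. (\<integral>\<^sup>+ x. ennreal ((norm (x - R *v (x v* R)))\<^sup>2) \<partial>(Pe e0)) \<partial>measure_pmf Q)"
      by (simp add: measure_pmf.emeasure_space_1)
    also have "\<dots> \<le> compl_loss lsel (Pe e0) Q R"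
      unfolding compl_loss_def
      by (intro nn_integral_mono ennreal_leI proj_le[OF Rorth])
    also have "\<dots> \<le> (SUP P\<in>Pset E Pe. compl_loss lsel P Q R)"
      by (rule SUP_upper[OF Pin])
    finally show ?thesis .
  qed
  have "(SUP P\<in>Pset E Pe. compl_loss lsel P Q Rstar) \<le> ennreal (1+\<epsilon>) * ennreal W"
    by (rule SUP_least) (rule up)
  also have "\<dots> \<le> ennreal (1+\<epsilon>) * ennreal (worst_risk E Pe R)"
    unfolding W_def by (intro mult_left_mono ennreal_leI Rstar_min[OF Rorth]) simp
  also have "\<dots> \<le> ennreal (1+\<epsilon>) * (SUP P\<in>Pset E Pe. compl_loss lsel P Q R)"
    by (intro mult_left_mono low) simp
  finally show "(SUP P\<in>Pset E Pe. compl_loss lsel P Q Rstar)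
             \<le> ennreal (1 + \<epsilon>) * (SUP P\<in>Pset E Pe. compl_loss lsel P Q R)" .
qed

end
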